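(* For any nonzero ring $R$ and any integer $n\ge 2$, the matrix ring $\mathrm{M}_n(R)$ is not a CSNC ring.
   Context: All rings are associative with identity $1$. For a ring $R$, $\mathrm{Id}(R)$, $U(R)$, $\mathrm{Nil}(R)$ denote the sets of idempotents, units and nilpotent elements. An element $a\in R$ is clean if $a=e+u$ for some $e\in\mathrm{Id}(R)$, $u\in U(R)$. An element $a$ is strongly nil-clean if $a=e+q$ with $e\in \mathrm{Id}(R)$, $q\in\mathrm{Nil}(R)$ and $eq=qe$. A ring $R$ is called CSNC if every clean element of $R$ is strongly nil-clean. *)

theory Defs
  imports "HOL-Algebra.Ring" "Jordan_Normal_Form.Matrix"
begin

definition idempotents :: "('a, 'b) ring_scheme \<Rightarrow> 'a set" where
  "idempotents R = {e \<in> carrier R. e \<otimes>\<^bsub>R\<^esub> e = e}"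

definition nilpotents :: "('a, 'b) ring_scheme \<Rightarrow> 'a set" where
  "nilpotents R = {q \<in> carrier R. \<exists>k::nat. q [^]\<^bsub>R\<^esub> k = \<zero>\<^bsub>R\<^esub>}"

definition clean_elem :: "('a, 'b) ring_scheme \<Rightarrow> 'a \<Rightarrow> bool" where
  "clean_elem R a \<longleftrightarrow> (\<exists>e \<in> idempotents R. \<exists>u \<in> Units R. a = e \<oplus>\<^bsub>R\<^esub> u)"

definition strongly_nil_clean_elem :: "('a, 'b) ring_scheme \<Rightarrow> 'a \<Rightarrow> bool" where
  "strongly_nil_clean_elem R a \<longleftrightarrow>
     (\<exists>e \<in> idempotents R. \<exists>q \<in> nilpotents R.
        a = e \<oplus>\<^bsub>R\<^esub> q \<and> e \<otimes>\<^bsub>R\<^esub> q = q \<otimes>\<^bsub>R\<^esub> e)"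

definition CSNC :: "('a, 'b) ring_scheme \<Rightarrow> bool" where
  "CSNC R \<longleftrightarrow> (\<forall>a \<in> carrier R. clean_elem R a \<longrightarrow> strongly_nil_clean_elem R a)"

end

theory Submission
  imports Defs
begin

lemma (in ring) snc_kill:
  assumes e: "e \<in> carrier R" "e \<otimes> e = e" and q: "q \<in> carrier R" "q [^] (k::nat) = \<zero>"
    and com: "e \<otimes> q = q \<otimes> e" and f: "f \<in> carrier R" "f \<otimes> f = f"
    and sq: "(e \<oplus> q) \<otimes> (e \<oplus> q) = (e \<oplus> q) \<oplus> f"
  shows "f = \<zero>"
proof -
  define c where "c = e \<oplus> e \<oplus> q \<ominus> \<one>"
  have c: "c \<in> carrier R" unfolding c_def using e q by simp
  have "(e \<oplus> q) \<otimes> (e \<oplus> q) = e \<oplus> q \<otimes> e \<oplus> q \<otimes> e \<oplus> q \<otimes> q"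
    using e q com by (simp add: l_distr r_distr a_ac)
  also have "\<dots> = (e \<oplus> q) \<oplus> q \<otimes> c"
    unfolding c_def using e q by (simp add: r_distr r_minus minus_eq a_ac, simp add: a_assoc[symmetric] r_neg)
  finally have "(e \<oplus> q) \<oplus> f = (e \<oplus> q) \<oplus> q \<otimes> c" using sq by simp
  hence fq: "f = q \<otimes> c" using e q f c by (metis add.m_closed add.Units_l_cancel add.Units_eq m_closed)
  have qc: "q \<otimes> c = c \<otimes> q"
    unfolding c_def using e q com by (simp add: l_distr r_distr l_minus r_minus minus_eq m_assoc)
  have fk: "f [^] k = \<zero>"
    using fq pow_mult_distrib[OF qc q(1) c, of k] q c by simp
  show ?thesis
  proof (cases k)
    case 0 then have "\<one> = \<zero>" using fk by simp
    then show ?thesis using f by (metis r_one r_null)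
  next
    case (Suc m)
    have "f [^] Suc j = f" for j by (induction j) (use f in \<open>auto simp: m_assoc\<close>)
    then show ?thesis using fk Suc by simp
  qed
qed

definition blk :: "nat \<Rightarrow> (nat \<Rightarrow> nat \<Rightarrow> 'a::ring_1) \<Rightarrow> 'a \<Rightarrow> 'a mat" where
  "blk n M d = mat n n (\<lambda>(i,j). if i < 2 \<and> j < 2 then M i j else if i = j then d else 0)"

lemma blk_carrier[simp]: "blk n M d \<in> carrier_mat n n" by (simp add: blk_def)

lemma sum_two: fixes n :: nat assumes "2 \<le> n" and "\<And>k. k < n \<Longrightarrow> k \<ge> 2 \<Longrightarrow> g k = 0"
  shows "(\<Sum>k<n. g k) = g 0 + g 1"
proof -
  have "(\<Sum>k<n. g k) = (\<Sum>k\<in>{0,1}. g k)"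
    by (rule sum.mono_neutral_right) (use assms in auto)
  then show ?thesis by simp
qed

lemma sum_one: fixes n :: nat assumes "i < n" and "\<And>k. k < n \<Longrightarrow> k \<noteq> i \<Longrightarrow> g k = 0"
  shows "(\<Sum>k<n. g k) = g i"
proof -
  have "(\<Sum>k<n. g k) = (\<Sum>k\<in>{i}. g k)"
    by (rule sum.mono_neutral_right) (use assms in auto)
  then show ?thesis by simp
qed

lemma blk_mult: assumes n: "2 \<le> n"
  shows "blk n M d * blk n N e = blk n (\<lambda>i j. M i 0 * N 0 j + M i 1 * N 1 j) (d * e)"
proof -
  have entry: "(blk n M d * blk n N e) $$ (i,j) = blk n (\<lambda>i j. M i 0 * N 0 j + M i 1 * N 1 j) (d * e) $$ (i, j)"
    if i: "i < n" and j: "j < n" for i j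
  proof -
  have "(blk n M d * blk n N e) $$ (i,j) = (\<Sum>k<n. blk n M d $$ (i,k) * blk n N e $$ (k,j))"
    using i j by (simp add: blk_def scalar_prod_def lessThan_atLeast0)
  also have "\<dots> = blk n (\<lambda>i j. M i 0 * N 0 j + M i 1 * N 1 j) (d * e) $$ (i, j)"
  proof (cases "i < 2")
    case True
    then show ?thesis using i j n
      by (subst sum_two) (auto simp: blk_def)
  next
    case False
    then show ?thesis using i j n
      by (subst sum_one[of i]) (auto simp: blk_def)
  qed
  finally show ?thesis .
  qed
  show ?thesis by (rule eq_matI; (subst entry)?; simp add: blk_def)
qed

lemma blk_add: "blk n M d + blk n N e = blk n (\<lambda>i j. M i j + N i j) (d + e)"
  by (rule eq_matI) (auto simp: blk_def)

lemma blk_one: "1\<^sub>m n = blk n (\<lambda>i j. if i = j then 1 else 0) 1"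
  by (rule eq_matI) (auto simp: blk_def)

lemma blk_zero: "0\<^sub>m n n = blk n (\<lambda>i j. 0) 0"
  by (rule eq_matI) (auto simp: blk_def)

lemma blk_cong: "(\<And>i j. i < 2 \<Longrightarrow> j < 2 \<Longrightarrow> M i j = N i j) \<Longrightarrow> d = e \<Longrightarrow> blk n M d = blk n N e"
  unfolding blk_def by (rule cong_mat) auto


lemma ring_mat1: "ring (ring_mat TYPE('a :: ring_1) n b)"
  by (unfold_locales, insert add_inv_exists_mat, auto simp: ring_mat_def algebra_simps Units_def)

theorem mainTheorem17:
  fixes n :: nat
  assumes "(0::'a::ring_1) \<noteq> 1"
    and "n \<ge> 2"
  shows "\<not> CSNC (ring_mat TYPE('a) n ())"
proof
  assume C: "CSNC (ring_mat TYPE('a) n ())"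
  let ?R = "ring_mat TYPE('a) n ()"
  interpret R: ring ?R by (rule ring_mat1)
  have n: "2 \<le> n" by fact
  define A :: "nat \<Rightarrow> nat \<Rightarrow> 'a" where "A = (\<lambda>i j. if i = 0 \<and> j = 0 then 0 else 1)"
  define B :: "nat \<Rightarrow> nat \<Rightarrow> 'a" where "B = (\<lambda>i j. if i = 0 \<and> j = 0 then -1 else if i = 1 \<and> j = 1 then 0 else 1)"
  define I :: "nat \<Rightarrow> nat \<Rightarrow> 'a" where "I = (\<lambda>i j. if i = j then 1 else 0)"
  define a where "a = blk n A 1"
  define b where "b = blk n B 1"
  define f where "f = blk n I (0::'a)"
  have ab: "a * b = 1\<^sub>m n" unfolding a_def b_def blk_one blk_mult[OF n]
    by (rule blk_cong) (auto simp: A_def B_def)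
  have ba: "b * a = 1\<^sub>m n" unfolding a_def b_def blk_one blk_mult[OF n]
    by (rule blk_cong) (auto simp: A_def B_def)
  have aa: "a * a = a + f" unfolding a_def f_def blk_add blk_mult[OF n]
    by (rule blk_cong) (auto simp: A_def I_def)
  have ff: "f * f = f" unfolding f_def blk_mult[OF n]
    by (rule blk_cong) (auto simp: I_def)
  have fnz: "f \<noteq> 0\<^sub>m n n"
  proof
    assume "f = 0\<^sub>m n n"
    hence "f $$ (0,0) = (0\<^sub>m n n :: 'a mat) $$ (0,0)" by simp
    thus False using n assms(1) by (simp add: f_def blk_def I_def)
  qed
  have acar: "a \<in> carrier ?R" by (simp add: a_def ring_mat_simps)
  have bcar: "b \<in> carrier ?R" by (simp add: b_def ring_mat_simps)
  have "a \<in> Units ?R" using acar bcar ab ba unfolding Units_def by (auto simp: ring_mat_simps)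
  moreover have "\<zero>\<^bsub>?R\<^esub> \<in> idempotents ?R" by (simp add: idempotents_def)
  moreover have "a = \<zero>\<^bsub>?R\<^esub> \<oplus>\<^bsub>?R\<^esub> a" using acar by simp
  ultimately have "clean_elem ?R a" unfolding clean_elem_def by blast
  with C acar have "strongly_nil_clean_elem ?R a" unfolding CSNC_def by blast
  then obtain e q k where e: "e \<in> carrier ?R" "e \<otimes>\<^bsub>?R\<^esub> e = e"
    and q: "q \<in> carrier ?R" "q [^]\<^bsub>?R\<^esub> (k::nat) = \<zero>\<^bsub>?R\<^esub>"
    and aeq: "a = e \<oplus>\<^bsub>?R\<^esub> q" and com: "e \<otimes>\<^bsub>?R\<^esub> q = q \<otimes>\<^bsub>?R\<^esub> e"
    unfolding strongly_nil_clean_elem_def idempotents_def nilpotents_def by blast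
  have fcar: "f \<in> carrier ?R" by (simp add: f_def ring_mat_simps)
  have "f = \<zero>\<^bsub>?R\<^esub>"
    by (rule R.snc_kill[OF e q com fcar]) (use ff aa aeq in \<open>auto simp: ring_mat_simps\<close>)
  thus False using fnz by (simp add: ring_mat_simps)
qed

end
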